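(* There are uncountably many paving tropical ideals of degree $3$ in $\mathbb{B}[x^{\pm1}]$ (in particular, uncountably many zero-dimensional tropical ideals of degree $3$ in $\mathbb{B}[x^{\pm1}]$).
   Context: $\mathbb{B}=\{\infty,0\}$ with $\oplus=\min$ and multiplication $+$; $\operatorname{supp}(f)$ is the set of exponents with coefficient $\neq\infty$. A tropical ideal $I\subset\mathbb{B}[x^{\pm1}]$ is an ideal such that for all $f,g\in I$ and $u\in\operatorname{supp}(f)\cap\operatorname{supp}(g)$ there is $h\in I$ with $\operatorname{supp}(f)\Delta\operatorname{supp}(g)\subset\operatorname{supp}(h)\subset(\operatorname{supp}(f)\cup\operatorname{supp}(g))\setminus\{u\}$. Its underlying matroid on $\mathbb{Z}$ has as independent sets those containing no support of a polynomial of $I$. $I$ is zero-dimensional of degree $r$ iff this matroid has finite rank $r$. $I$ is a paving tropical ideal if it is zero-dimensional and every minimal support of a polynomial in $I$ (circuit) has size $\deg(I)$ or $\deg(I)+1$. *)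

theory Defs
  imports Main "HOL-Library.Countable_Set"
begin

text \<open>A Laurent polynomial over the Boolean semifield B = {inf, 0} (min, +) is determined
by its support, a finite subset of the integers: coefficient 0 on the support, inf elsewhere.
Tropical addition (min) corresponds to union of supports, the zero polynomial (all inf)
to the empty set, and tropical multiplication (+) to the Minkowski sum of supports.\<close>

definition bmult :: "int set \<Rightarrow> int set \<Rightarrow> int set" where
  "bmult f g = {i + j | i j. i \<in> f \<and> j \<in> g}"

definition b_ideal :: "int set set \<Rightarrow> bool" where
  "b_ideal I \<longleftrightarrow> (\<forall>f\<in>I. finite f) \<and> {} \<in> I \<and>
     (\<forall>f\<in>I. \<forall>g\<in>I. f \<union> g \<in> I) \<and>
     (\<forall>f\<in>I. \<forall>g. finite g \<longrightarrow> bmult g f \<in> I)"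

definition tropical_ideal :: "int set set \<Rightarrow> bool" where
  "tropical_ideal I \<longleftrightarrow> b_ideal I \<and>
     (\<forall>f\<in>I. \<forall>g\<in>I. \<forall>u\<in>f \<inter> g. \<exists>h\<in>I.
        (f - g) \<union> (g - f) \<subseteq> h \<and> h \<subseteq> (f \<union> g) - {u})"

definition matroid_indep :: "int set set \<Rightarrow> int set \<Rightarrow> bool" where
  "matroid_indep I A \<longleftrightarrow> (\<forall>f\<in>I. f \<noteq> {} \<longrightarrow> \<not> f \<subseteq> A)"

definition zero_dim_degree :: "int set set \<Rightarrow> nat \<Rightarrow> bool" where
  "zero_dim_degree I r \<longleftrightarrow> tropical_ideal I \<and>
     (\<forall>A. matroid_indep I A \<longrightarrow> finite A \<and> card A \<le> r) \<and>
     (\<exists>A. finite A \<and> matroid_indep I A \<and> card A = r)"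

definition circuit :: "int set set \<Rightarrow> int set \<Rightarrow> bool" where
  "circuit I C \<longleftrightarrow> C \<in> I \<and> C \<noteq> {} \<and> (\<forall>f\<in>I. f \<noteq> {} \<longrightarrow> f \<subseteq> C \<longrightarrow> f = C)"

definition paving_tropical_ideal :: "int set set \<Rightarrow> bool" where
  "paving_tropical_ideal I \<longleftrightarrow> (\<exists>r. zero_dim_degree I r \<and>
     (\<forall>C. circuit I C \<longrightarrow> card C = r \<or> card C = r + 1))"

end

theory Submission
  imports Defs
begin

definition T :: "nat \<Rightarrow> int set" where
  "T n = (\<lambda>a. a * 4^n) ` {0,1,3}"

definition line :: "nat set \<Rightarrow> int set \<Rightarrow> bool" where
  "line A L \<longleftrightarrow> (\<exists>n\<in>A. \<exists>k. L = (\<lambda>x. k + x) ` T n)"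

definition Iof :: "nat set \<Rightarrow> int set set" where
  "Iof A = {S. finite S \<and> (S = {} \<or> line A S \<or>
      (card S = 4 \<and> (\<forall>L. line A L \<longrightarrow> \<not> L \<subseteq> S)) \<or> card S \<ge> 5)}"

lemma pow4_aux:
  fixes c c' :: int
  assumes "c * 4^n = c' * 4^m" "\<bar>c\<bar> \<le> 3" "c' \<noteq> 0" "n < m"
  shows False
proof -
  have "(4::int)^m = 4^n * 4^(m-n)" using assms(4)
    by (metis le_add_diff_inverse less_imp_le power_add)
  then have "c * 4^n = (c' * 4^(m-n)) * 4^n" using assms(1) by (simp add: algebra_simps)
  then have c: "c = c' * 4^(m-n)" by simp
  have p: "(4::int)^(m-n) \<ge> 4^1" using assms(4)
    by (intro power_increasing) auto
  have "\<bar>c'\<bar> \<ge> 1" using assms(3) by linarith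
  then have "\<bar>c'\<bar> * 4^(m-n) \<ge> 1 * 4" using p by (intro mult_mono) auto
  then have "\<bar>c\<bar> \<ge> 4" using c by (simp add: abs_mult)
  then show False using assms(2) by simp
qed

lemma pow4:
  fixes c c' :: int
  assumes "c * 4^n = c' * 4^m" "\<bar>c\<bar> \<le> 3" "\<bar>c'\<bar> \<le> 3" "c \<noteq> 0" "c' \<noteq> 0"
  shows "n = m \<and> c = c'"
proof -
  have "n = m"
    using pow4_aux[OF assms(1) assms(2) assms(5)] pow4_aux[OF assms(1)[symmetric] assms(3) assms(4)]
    by (meson linorder_neqE_nat)
  then show ?thesis using assms(1) by simp
qed

lemma core:
  assumes "a \<in> T n" "b \<in> T n" "a' \<in> T m" "b' \<in> T m" "a \<noteq> b" "a - b = a' - b'"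
  shows "n = m \<and> a = a' \<and> b = b'"
proof -
  obtain \<alpha> \<beta> \<alpha>' \<beta>' :: int where ab: "\<alpha> \<in> {0,1,3}" "\<beta> \<in> {0,1,3}" "\<alpha>' \<in> {0,1,3}" "\<beta>' \<in> {0,1,3}"
    and eq: "a = \<alpha> * 4^n" "b = \<beta> * 4^n" "a' = \<alpha>' * 4^m" "b' = \<beta>' * 4^m"
    using assms(1-4) unfolding T_def by blast
  have ne: "\<alpha> \<noteq> \<beta>" using assms(5) eq by auto
  have ne': "\<alpha>' \<noteq> \<beta>'" using assms(5,6) eq by auto
  have e: "(\<alpha> - \<beta>) * 4^n = (\<alpha>' - \<beta>') * 4^m" using assms(6) eq by (simp add: algebra_simps)
  have "n = m \<and> \<alpha> - \<beta> = \<alpha>' - \<beta>'"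
    by (rule pow4[OF e]) (use ab ne ne' in auto)
  moreover have "\<alpha> = \<alpha>' \<and> \<beta> = \<beta>'" if "\<alpha> - \<beta> = \<alpha>' - \<beta>'"
    using ab ne that by auto
  ultimately show ?thesis using eq by auto
qed

lemma T_card: "finite (T n) \<and> card (T n) = 3"
proof -
  have "(0::int) < 4^n" by simp
  then show ?thesis unfolding T_def by auto
qed

lemma line_card: "line A L \<Longrightarrow> finite L \<and> card L = 3"
  unfolding line_def using T_card by (auto simp: card_image)

lemma line_two:
  assumes "line A L1" "line A L2" "x \<in> L1" "x \<in> L2" "y \<in> L1" "y \<in> L2" "x \<noteq> y"
  shows "L1 = L2"
proof -
  obtain n k where L1: "L1 = (\<lambda>x. k + x) ` T n" using assms(1) unfolding line_def by blast
  obtain m j where L2: "L2 = (\<lambda>x. j + x) ` T m" using assms(2) unfolding line_def by blast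
  obtain a b where "a \<in> T n" "b \<in> T n" "x = k + a" "y = k + b" using assms(3,5) L1 by blast
  moreover obtain a' b' where "a' \<in> T m" "b' \<in> T m" "x = j + a'" "y = j + b'" using assms(4,6) L2 by blast
  ultimately have "n = m \<and> a = a' \<and> b = b'" using core[of a n b a' m b'] assms(7) by auto
  then show ?thesis using L1 L2 \<open>x = k + a\<close> \<open>x = j + a'\<close> by auto
qed

lemma line_shift: "line A L \<Longrightarrow> line A ((\<lambda>x. c + x) ` L)"
  unfolding line_def by (auto simp: image_image add.assoc) (metis image_cong add.assoc)

lemma Iof_cases:
  assumes "S \<in> Iof A" "S \<noteq> {}"
  shows "finite S \<and> (line A S \<or> (card S = 4 \<and> (\<forall>L. line A L \<longrightarrow> \<not> L \<subseteq> S)) \<or> card S \<ge> 5)"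
  using assms unfolding Iof_def by auto

lemma line_in: "line A L \<Longrightarrow> L \<in> Iof A"
  unfolding Iof_def using line_card by auto

lemma in_line_plus_point:
  assumes "S \<in> Iof A" "line A L" "v \<notin> L" "S \<subseteq> insert v L" "v \<in> S"
  shows False
proof -
  have fL: "finite L" "card L = 3" using line_card[OF assms(2)] by auto
  have cI: "card (insert v L) = 4" using fL assms(3) by simp
  have cS: "card S \<le> 4" using card_mono[OF _ assms(4)] fL cI by simp
  have S: "finite S \<and> (line A S \<or> (card S = 4 \<and> (\<forall>L. line A L \<longrightarrow> \<not> L \<subseteq> S)) \<or> card S \<ge> 5)"
    using Iof_cases[OF assms(1)] assms(5) by auto
  show False
  proof (cases "line A S")
    case True
    have cS3: "card S = 3" using line_card[OF True] by simp
    have "card (S - {v}) = 2" using cS3 assms(5) S by simp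
    then obtain x y where xy: "x \<in> S - {v}" "y \<in> S - {v}" "x \<noteq> y"
      by (metis card_2_iff insertI1 insertI2)
    then have "x \<in> L" "y \<in> L" using assms(4) by auto
    then have "S = L" using line_two[OF True assms(2)] xy by auto
    then show False using assms(3,5) by simp
  next
    case False
    then have "card S = 4" "\<forall>L. line A L \<longrightarrow> \<not> L \<subseteq> S" using S cS by auto
    moreover have "S = insert v L"
      using card_subset_eq[OF _ assms(4)] fL cI \<open>card S = 4\<close> by simp
    ultimately show False using assms(2) by auto
  qed
qed

lemma union_big:
  assumes "f \<in> Iof A" "g \<in> Iof A" "f \<noteq> {}" "\<not> g \<subseteq> f"
  shows "card (f \<union> g) \<ge> 5"
proof -
  have ff: "finite f" using assms(1) unfolding Iof_def by auto
  have fg: "finite g" using assms(2) unfolding Iof_def by auto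
  obtain x where x: "x \<in> g" "x \<notin> f" using assms(4) by auto
  have c1: "card (insert x f) = card f + 1" using ff x by simp
  have c2: "card (insert x f) \<le> card (f \<union> g)" using x ff fg by (intro card_mono) auto
  have F: "line A f \<or> card f \<ge> 4" using Iof_cases[OF assms(1,3)] by auto
  show ?thesis
  proof (cases "line A f")
    case True
    have cf: "card f = 3" using line_card[OF True] by simp
    show ?thesis
    proof (rule ccontr)
      assume "\<not> ?thesis"
      then have "card (f \<union> g) = 4" using c1 c2 cf by simp
      then have "insert x f = f \<union> g"
        using card_subset_eq[of "f \<union> g" "insert x f"] ff fg x c1 cf by auto
      then have "g \<subseteq> insert x f" by auto
      then show False using in_line_plus_point[OF assms(2) True x(2) _ x(1)] by simp
    qed
  next
    case False
    then show ?thesis using F c1 c2 by simp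
  qed
qed

lemma union_closed:
  assumes "f \<in> Iof A" "g \<in> Iof A"
  shows "f \<union> g \<in> Iof A"
proof -
  have fin: "finite (f \<union> g)" using assms unfolding Iof_def by auto
  consider "f = {}" | "g = {}" | "g \<subseteq> f" | "f \<subseteq> g" | "f \<noteq> {}" "\<not> g \<subseteq> f" by blast
  then show ?thesis
  proof cases
    case 5 then show ?thesis using union_big[OF assms] fin unfolding Iof_def by auto
  qed (use assms in \<open>auto simp: sup_absorb1 sup_absorb2\<close>)
qed

lemma shift_closed:
  assumes "S \<in> Iof A"
  shows "(\<lambda>x. c + x) ` S \<in> Iof A"
proof -
  have inj: "inj (\<lambda>x::int. c + x)" by (simp add: inj_def)
  have card: "card ((\<lambda>x. c + x) ` S) = card S" using inj by (simp add: card_image inj_on_def)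
  have bk: "(\<lambda>x. -c + x) ` ((\<lambda>x. c + x) ` S) = S" by (simp add: image_image)
  have nl: "\<not> L \<subseteq> (\<lambda>x. c + x) ` S" if "\<forall>L. line A L \<longrightarrow> \<not> L \<subseteq> S" "line A L" for L
  proof
    assume "L \<subseteq> (\<lambda>x. c + x) ` S"
    then have "(\<lambda>x. -c + x) ` L \<subseteq> S" using bk by blast
    then show False using that line_shift[OF that(2), of "-c"] by auto
  qed
  show ?thesis using assms card nl line_shift unfolding Iof_def by auto
qed

lemma bmult_empty: "bmult {} f = {}" unfolding bmult_def by auto

lemma bmult_insert: "bmult (insert j g) f = (\<lambda>x. j + x) ` f \<union> bmult g f"
  unfolding bmult_def by auto

lemma bmult_closed:
  assumes "finite g" "f \<in> Iof A"
  shows "bmult g f \<in> Iof A"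
  using assms(1)
proof (induction g rule: finite_induct)
  case empty then show ?case by (simp add: bmult_empty Iof_def)
next
  case (insert j g)
  then show ?case using bmult_insert union_closed shift_closed assms(2) by metis
qed

lemma elim:
  assumes f: "f \<in> Iof A" and g: "g \<in> Iof A" and u: "u \<in> f \<inter> g"
  shows "\<exists>h\<in>Iof A. (f - g) \<union> (g - f) \<subseteq> h \<and> h \<subseteq> (f \<union> g) - {u}"
proof (cases "f = g")
  case True
  then show ?thesis by (intro bexI[of _ "{}"]) (auto simp: Iof_def)
next
  case False
  define U where "U = (f \<union> g) - {u}"
  have fin: "finite (f \<union> g)" using f g unfolding Iof_def by auto
  have sub: "(f - g) \<union> (g - f) \<subseteq> U" using u unfolding U_def by auto
  show ?thesis
  proof (cases "U \<in> Iof A")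
    case True then show ?thesis using sub unfolding U_def by blast
  next
    case False
    have "card (f \<union> g) \<ge> 5"
    proof (cases "g \<subseteq> f")
      case True
      then have "\<not> f \<subseteq> g" using \<open>f \<noteq> g\<close> by blast
      moreover have "g \<noteq> {}" using u by blast
      ultimately show ?thesis using union_big[OF g f] by (simp add: Un_commute)
    next
      case False
      moreover have "f \<noteq> {}" using u by blast
      ultimately show ?thesis using union_big[OF f g] by simp
    qed
    then have cU: "card U \<ge> 4" using fin u unfolding U_def by simp
    have finU: "finite U" using fin unfolding U_def by auto
    have cU4: "card U = 4" and noL: "\<not> (\<forall>L. line A L \<longrightarrow> \<not> L \<subseteq> U)"
      using False cU finU unfolding Iof_def by auto
    then obtain L where L: "line A L" "L \<subseteq> U" by blast
    have "(f - g) \<union> (g - f) \<subseteq> L"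
    proof
      fix x assume x: "x \<in> (f - g) \<union> (g - f)"
      show "x \<in> L"
      proof (rule ccontr)
        assume xL: "x \<notin> L"
        have cL: "card L = 3" "finite L" using line_card[OF L(1)] by auto
        have xU: "x \<in> U" using x sub by auto
        have "card (U - {x}) = 3" using cU4 xU finU by simp
        moreover have "L \<subseteq> U - {x}" using L xL by auto
        ultimately have LU: "L = U - {x}" using card_subset_eq[of "U - {x}" L] finU cL by auto
        have ux: "u \<noteq> x" using u x by auto
        have uL: "u \<notin> L" using LU unfolding U_def by auto
        show False
        proof (cases "x \<in> f")
          case True
          then have "x \<notin> g" using x by auto
          then have "g \<subseteq> insert u L" using LU unfolding U_def by auto
          then show False using in_line_plus_point[OF g L(1) uL] u by auto
        next
          case False
          then have "f \<subseteq> insert u L" using LU unfolding U_def by auto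
          then show False using in_line_plus_point[OF f L(1) uL] u by auto
        qed
      qed
    qed
    then show ?thesis using L line_in unfolding U_def by blast
  qed
qed

lemma trop: "tropical_ideal (Iof A)"
proof -
  have a: "\<forall>f\<in>Iof A. finite f" "{} \<in> Iof A" by (auto simp: Iof_def)
  show ?thesis
    unfolding tropical_ideal_def b_ideal_def
  proof (intro conjI ballI allI impI)
    fix f g assume "f \<in> Iof A" "g \<in> Iof A"
    then show "f \<union> g \<in> Iof A" by (rule union_closed)
  next
    fix f and g :: "int set" assume "f \<in> Iof A" "finite g"
    then show "bmult g f \<in> Iof A" using bmult_closed by blast
  next
    fix f g u assume "f \<in> Iof A" "g \<in> Iof A" "u \<in> f \<inter> g"
    then show "\<exists>h\<in>Iof A. f - g \<union> (g - f) \<subseteq> h \<and> h \<subseteq> f \<union> g - {u}" by (rule elim)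
  qed (use a in auto)
qed

lemma not_line_012: "\<not> line A {0,1,2}"
proof
  assume "line A {0,1,2}"
  then obtain n k where L: "{0,1,2} = (\<lambda>x. k + x) ` T n" unfolding line_def by blast
  have "-k \<in> T n" "1-k \<in> T n" "2-k \<in> T n"
  proof -
    have h: "x - k \<in> T n" if "x \<in> {0,1,2}" for x
    proof -
      have "x \<in> (\<lambda>x. k + x) ` T n" using that L by simp
      then show ?thesis by auto
    qed
    show "-k \<in> T n" using h[of 0] by simp
    show "1-k \<in> T n" using h[of 1] by simp
    show "2-k \<in> T n" using h[of 2] by simp
  qed
  then have "n = n \<and> 1 - k = 2 - k \<and> -k = 1 - k"
    using core[of "1-k" n "-k" "2-k" n "1-k"] by simp
  then show False by simp
qed

lemma sub4:
  assumes "\<not> (finite B \<and> card B \<le> 3)"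
  obtains D where "D \<subseteq> B" "finite D" "card D = 4"
proof -
  have "\<exists>D. D \<subseteq> B \<and> finite D \<and> card D = 4"
  proof (cases "finite B")
    case True
    then have "4 \<le> card B" using assms by simp
    then show ?thesis using obtain_subset_with_card_n[of 4 B] by metis
  next
    case False
    then show ?thesis using infinite_arbitrarily_large by blast
  qed
  then show ?thesis using that by blast
qed

lemma dep4:
  assumes "finite D" "card D = 4"
  shows "\<exists>f\<in>Iof A. f \<noteq> {} \<and> f \<subseteq> D"
proof (cases "D \<in> Iof A")
  case True
  moreover have "D \<noteq> {}" using assms by auto
  ultimately show ?thesis by blast
next
  case False
  then obtain L where L: "line A L" "L \<subseteq> D" using assms unfolding Iof_def by auto
  moreover have "L \<noteq> {}" using line_card[OF L(1)] by auto
  ultimately show ?thesis using line_in by blast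
qed

lemma zd: "zero_dim_degree (Iof A) 3"
  unfolding zero_dim_degree_def
proof (intro conjI)
  show "tropical_ideal (Iof A)" by (rule trop)
next
  show "\<forall>B. matroid_indep (Iof A) B \<longrightarrow> finite B \<and> card B \<le> 3"
  proof (intro allI impI)
    fix B assume ind: "matroid_indep (Iof A) B"
    show "finite B \<and> card B \<le> 3"
    proof (rule ccontr)
      assume "\<not> (finite B \<and> card B \<le> 3)"
      then obtain D where D: "D \<subseteq> B" "finite D" "card D = 4" by (rule sub4)
      then obtain f where "f \<in> Iof A" "f \<noteq> {}" "f \<subseteq> D"
        using dep4[OF D(2,3), of A] by blast
      then show False using ind D(1) unfolding matroid_indep_def by blast
    qed
  qed
next
  show "\<exists>B. finite B \<and> matroid_indep (Iof A) B \<and> card B = 3"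
  proof (intro exI conjI)
    show "matroid_indep (Iof A) {0,1,2}"
      unfolding matroid_indep_def
    proof (intro ballI impI notI)
      fix f assume f: "f \<in> Iof A" "f \<noteq> {}" "f \<subseteq> {0,1,2}"
      have "card f \<le> 3" using card_mono[OF _ f(3)] by simp
      then have "line A f" using Iof_cases[OF f(1,2)] by auto
      then have "card f = 3" using line_card by auto
      then have "f = {0,1,2}" using card_subset_eq[OF _ f(3)] by simp
      then show False using not_line_012 \<open>line A f\<close> by simp
    qed
  qed auto
qed

lemma paving: "paving_tropical_ideal (Iof A)"
  unfolding paving_tropical_ideal_def
proof (intro exI conjI allI impI)
  show "zero_dim_degree (Iof A) 3" by (rule zd)
next
  fix C assume c: "circuit (Iof A) C"
  then have C: "C \<in> Iof A" "C \<noteq> {}" and mn: "\<forall>f\<in>Iof A. f \<noteq> {} \<longrightarrow> f \<subseteq> C \<longrightarrow> f = C"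
    unfolding circuit_def by auto
  have cs: "finite C" "line A C \<or> card C = 4 \<or> card C \<ge> 5" using Iof_cases[OF C] by auto
  show "card C = 3 \<or> card C = 3 + 1"
  proof (cases "card C \<ge> 5")
    case True
    then have "\<not> (finite C \<and> card C \<le> 3)" by simp
    then obtain D where D: "D \<subseteq> C" "finite D" "card D = 4" by (rule sub4)
    then obtain f where f: "f \<in> Iof A" "f \<noteq> {}" "f \<subseteq> D"
      using dep4[OF D(2,3), of A] by blast
    then have "f = C" using mn D(1) by auto
    then have "card C \<le> 4" using card_mono[OF D(2) f(3)] D by simp
    then show ?thesis using True by simp
  next
    case False
    then show ?thesis using cs line_card by auto
  qed
qed

lemma T_in: "T n \<in> Iof A \<longleftrightarrow> n \<in> A"
proof
  assume "n \<in> A"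
  then have "line A (T n)" unfolding line_def by (intro bexI[of _ n] exI[of _ 0]) auto
  then show "T n \<in> Iof A" by (rule line_in)
next
  assume a: "T n \<in> Iof A"
  have "T n \<noteq> {}" using T_card[of n] by auto
  then have "line A (T n)" using Iof_cases[OF a] T_card[of n] by auto
  then obtain m k where m: "m \<in> A" "T n = (\<lambda>x. k + x) ` T m" unfolding line_def by blast
  have z: "0 \<in> T n" "4^n \<in> T n" unfolding T_def by auto
  obtain a' b' where "a' \<in> T m" "b' \<in> T m" "0 = k + a'" "4^n = k + b'" using z m(2) by blast
  moreover have "(0::int) \<noteq> 4^n" by simp
  ultimately have "0 - 4^n = a' - b'" "(0::int) \<noteq> 4^n" by auto
  then have "n = m" using core[of 0 n "4^n" a' m b'] z \<open>a' \<in> T m\<close> \<open>b' \<in> T m\<close> by blast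
  then show "n \<in> A" using m by simp
qed

lemma inj_Iof: "inj Iof"
proof (rule injI)
  fix A B assume "Iof A = Iof B"
  then show "A = B" using T_in by blast
qed

lemma unc_nat_set: "\<not> countable (UNIV :: nat set set)"
proof
  assume "countable (UNIV :: nat set set)"
  then obtain f :: "nat \<Rightarrow> nat set" where "range f = UNIV"
    by (metis uncountable_def UNIV_not_empty)
  then obtain n where "f n = {x. x \<notin> f x}" by (metis UNIV_I imageE)
  then show False by blast
qed

theorem mainTheorem8:
  shows "\<not> countable {I. paving_tropical_ideal I \<and> zero_dim_degree I 3} \<and>
         \<not> countable {I. zero_dim_degree I 3}"
proof -
  have sub: "range Iof \<subseteq> {I. paving_tropical_ideal I \<and> zero_dim_degree I 3}"
    using paving zd by auto
  have "\<not> countable (range Iof)"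
    using countable_image_inj_on[of Iof UNIV] inj_Iof unc_nat_set by auto
  then have 1: "\<not> countable {I. paving_tropical_ideal I \<and> zero_dim_degree I 3}"
    using countable_subset[OF sub] by blast
  then show ?thesis using countable_subset[of "{I. paving_tropical_ideal I \<and> zero_dim_degree I 3}" "{I. zero_dim_degree I 3}"] by blast
qed

end
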